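(* Let $n\geq 1$, $0\leq p\leq1$, and $1\leq k<n$. Then $$\Pr_p(PC^-_{[k]})=2^k\bigl(p^{2^n-2^{n-k}}-p^{2^n}\bigr),\qquad \Pr_p(NC^-_{[k]})=2^k\bigl((1-p)^{2^n-2^{n-k}}-(1-p)^{2^n}\bigr),$$ where $[k]=\{0,1,\dots,k-1\}$.
   Context: Boolean functions on $n$ variables are maps $f:\{0,1\}^n\to\{0,1\}$, variables indexed by $[n]=\{0,\dots,n-1\}$. The bias-$p$ probability measure on Boolean functions on $n$ variables is $\Pr_p(f)=p^{|f^{-1}\{1\}|}(1-p)^{|f^{-1}\{0\}|}$ (with $0^0=1$). For a nonempty $I\subseteq[n]$, $f$ is positively canalizing on $I$ if there is a function $\sigma:I\to\{0,1\}$ such that for all $x\in\{0,1\}^n$, if there exists $i\in I$ with $x_i\neq\sigma(i)$ then $f(x)=1$; negatively canalizing on $I$ is defined the same way with $f(x)=0$ in place of $f(x)=1$. $PC^-_I$ (resp. $NC^-_I$) is the set of nonconstant Boolean functions on $n$ variables that are positively (resp. negatively) canalizing on $I$. *)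

theory Defs
  imports Complex_Main
begin

text \<open>Inputs in {0,1}^n are modelled as predicates x :: nat => bool that are False
  at every index >= n (bit i of the input is x i, True = 1).\<close>
definition cube :: "nat \<Rightarrow> (nat \<Rightarrow> bool) set" where
  "cube n = {x. \<forall>i. n \<le> i \<longrightarrow> \<not> x i}"

text \<open>Boolean functions on n variables: maps cube n -> bool, canonically False
  outside the cube (so the set of Boolean functions is finite and in bijection with
  the maps {0,1}^n -> {0,1}).\<close>
definition boolfuns :: "nat \<Rightarrow> ((nat \<Rightarrow> bool) \<Rightarrow> bool) set" where
  "boolfuns n = {f. \<forall>x. x \<notin> cube n \<longrightarrow> \<not> f x}"

text \<open>Bias-p probability of a single Boolean function (0^0 = 1 holds for real ^).\<close>
definition prob_fun :: "nat \<Rightarrow> real \<Rightarrow> ((nat \<Rightarrow> bool) \<Rightarrow> bool) \<Rightarrow> real" where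
  "prob_fun n p f = p ^ card {x \<in> cube n. f x} * (1 - p) ^ card {x \<in> cube n. \<not> f x}"

definition Pr :: "nat \<Rightarrow> real \<Rightarrow> ((nat \<Rightarrow> bool) \<Rightarrow> bool) set \<Rightarrow> real" where
  "Pr n p S = (\<Sum>f \<in> S \<inter> boolfuns n. prob_fun n p f)"

definition constant_fun :: "nat \<Rightarrow> ((nat \<Rightarrow> bool) \<Rightarrow> bool) \<Rightarrow> bool" where
  "constant_fun n f \<longleftrightarrow> (\<exists>c. \<forall>x \<in> cube n. f x = c)"

definition canalizing_on :: "nat \<Rightarrow> bool \<Rightarrow> nat set \<Rightarrow> ((nat \<Rightarrow> bool) \<Rightarrow> bool) \<Rightarrow> bool" where
  "canalizing_on n b I f \<longleftrightarrow>
     (\<exists>\<sigma>. \<forall>x \<in> cube n. (\<exists>i \<in> I. x i \<noteq> \<sigma> i) \<longrightarrow> f x = b)"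

definition PC_minus :: "nat \<Rightarrow> nat set \<Rightarrow> ((nat \<Rightarrow> bool) \<Rightarrow> bool) set" where
  "PC_minus n I = {f \<in> boolfuns n. \<not> constant_fun n f \<and> canalizing_on n True I f}"

definition NC_minus :: "nat \<Rightarrow> nat set \<Rightarrow> ((nat \<Rightarrow> bool) \<Rightarrow> bool) set" where
  "NC_minus n I = {f \<in> boolfuns n. \<not> constant_fun n f \<and> canalizing_on n False I f}"

end

theory Submission
  imports Defs
begin

lemma binom_pow:
  fixes p :: real
  assumes "finite D"
  shows "(\<Sum>U\<in>Pow D. p ^ card U * (1 - p) ^ card (D - U)) = 1"
proof -
  have "(\<Prod>x\<in>D. p + (1 - p)) = (\<Sum>U\<in>Pow D. (\<Prod>x\<in>U. p) * (\<Prod>x\<in>D-U. 1 - p))"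
    by (rule prod_add[OF assms])
  moreover have "\<And>U. U \<in> Pow D \<Longrightarrow> (\<Prod>x\<in>U. p) * (\<Prod>x\<in>D-U. 1 - p) = p ^ card U * (1 - p) ^ card (D - U)"
    by simp
  ultimately show ?thesis by simp
qed

lemma card_sub:
  assumes "\<sigma> \<in> cube k" "k \<le> n"
  shows "card {x\<in>cube n. \<forall>i<k. x i = \<sigma> i} = 2 ^ (n - k)"
proof -
  define g where "g = (\<lambda>S::nat set. \<lambda>i. if i < k then \<sigma> i else i \<in> S)"
  have inj: "inj_on g (Pow {k..<n})"
  proof (rule inj_onI)
    fix S T assume S: "S \<in> Pow {k..<n}" and T: "T \<in> Pow {k..<n}" and e: "g S = g T"
    show "S = T"
    proof (rule set_eqI)
      fix i
      show "i \<in> S \<longleftrightarrow> i \<in> T"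
      proof (cases "i < k")
        case True then show ?thesis using S T by auto
      next
        case False then show ?thesis using fun_cong[OF e, of i] by (simp add: g_def)
      qed
    qed
  qed
  have img: "{x\<in>cube n. \<forall>i<k. x i = \<sigma> i} = g ` Pow {k..<n}"
  proof
    show "{x\<in>cube n. \<forall>i<k. x i = \<sigma> i} \<subseteq> g ` Pow {k..<n}"
    proof
      fix x assume x: "x \<in> {x\<in>cube n. \<forall>i<k. x i = \<sigma> i}"
      have "x = g {i\<in>{k..<n}. x i}"
        using x by (intro ext) (auto simp: g_def cube_def not_less, meson not_le)
      then show "x \<in> g ` Pow {k..<n}" by blast
    qed
  next
    show "g ` Pow {k..<n} \<subseteq> {x\<in>cube n. \<forall>i<k. x i = \<sigma> i}"
      using assms by (auto simp: g_def cube_def)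
  qed
  show ?thesis unfolding img using card_image[OF inj] by (simp add: card_Pow)
qed

lemma card_cube: "card (cube n) = 2 ^ n"
proof -
  have "(\<lambda>_. False) \<in> cube 0" by (simp add: cube_def)
  from card_sub[OF this, of n] show ?thesis by simp
qed

lemma finite_cube: "finite (cube n)"
  using card_cube by (metis card.infinite power_not_zero zero_neq_numeral)

lemma prob_A:
  fixes p :: real
  assumes "\<sigma> \<in> cube k" "k \<le> n"
  shows "sum (prob_fun n p) {f\<in>boolfuns n. \<forall>x\<in>cube n. (\<exists>i<k. x i \<noteq> \<sigma> i) \<longrightarrow> f x}
     = p ^ (2 ^ n - 2 ^ (n - k))"
proof -
  define C where "C = {x\<in>cube n. \<forall>i<k. x i = \<sigma> i}"
  define h where "h = (\<lambda>U x. x \<in> (cube n - C) \<union> U)"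
  have CS: "C \<subseteq> cube n" by (auto simp: C_def)
  have fin: "finite (cube n)" by (rule finite_cube)
  have finC: "finite C" using CS fin finite_subset by blast
  have cardC: "card C = 2 ^ (n - k)" unfolding C_def by (rule card_sub[OF assms])
  have cardD: "card (cube n - C) = 2 ^ n - 2 ^ (n - k)"
    using card_Diff_subset[OF finC CS] cardC card_cube by simp
  have img: "{f\<in>boolfuns n. \<forall>x\<in>cube n. (\<exists>i<k. x i \<noteq> \<sigma> i) \<longrightarrow> f x} = h ` Pow C"
  proof
    show "{f\<in>boolfuns n. \<forall>x\<in>cube n. (\<exists>i<k. x i \<noteq> \<sigma> i) \<longrightarrow> f x} \<subseteq> h ` Pow C"
    proof
      fix f assume f: "f \<in> {f\<in>boolfuns n. \<forall>x\<in>cube n. (\<exists>i<k. x i \<noteq> \<sigma> i) \<longrightarrow> f x}"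
      have "f = h {x\<in>C. f x}"
      proof (rule ext)
        fix x show "f x = h {x\<in>C. f x} x"
          using f by (auto simp: h_def C_def boolfuns_def)
      qed
      then show "f \<in> h ` Pow C" by blast
    qed
  next
    show "h ` Pow C \<subseteq> {f\<in>boolfuns n. \<forall>x\<in>cube n. (\<exists>i<k. x i \<noteq> \<sigma> i) \<longrightarrow> f x}"
      using CS by (auto simp: h_def C_def boolfuns_def)
  qed
  have inj: "inj_on h (Pow C)"
  proof (rule inj_onI)
    fix U V assume U: "U \<in> Pow C" and V: "V \<in> Pow C" and e: "h U = h V"
    show "U = V"
    proof (rule set_eqI)
      fix x show "x \<in> U \<longleftrightarrow> x \<in> V"
        using U V fun_cong[OF e, of x] by (auto simp: h_def)
    qed
  qed
  have pf: "prob_fun n p (h U) = p ^ (2 ^ n - 2 ^ (n - k)) * (p ^ card U * (1 - p) ^ card (C - U))"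
    if U: "U \<in> Pow C" for U
  proof -
    have s1: "{x \<in> cube n. h U x} = (cube n - C) \<union> U" using U CS by (auto simp: h_def)
    have s2: "{x \<in> cube n. \<not> h U x} = C - U" using U CS by (auto simp: h_def)
    have finU: "finite U" using U finC finite_subset by blast
    have "card ((cube n - C) \<union> U) = card (cube n - C) + card U"
      using U fin finU by (intro card_Un_disjoint) auto
    then have cU: "card ((cube n - C) \<union> U) = (2 ^ n - 2 ^ (n - k)) + card U" using cardD by simp
    show ?thesis unfolding prob_fun_def s1 s2 cU power_add by (simp only: mult.assoc)
  qed
  have "sum (prob_fun n p) (h ` Pow C) = sum (prob_fun n p \<circ> h) (Pow C)"
    by (rule sum.reindex[OF inj])
  also have "\<dots> = (\<Sum>U\<in>Pow C. p ^ (2 ^ n - 2 ^ (n - k)) * (p ^ card U * (1 - p) ^ card (C - U)))"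
    by (rule sum.cong) (auto simp: pf)
  also have "\<dots> = p ^ (2 ^ n - 2 ^ (n - k))"
    by (simp add: sum_distrib_left[symmetric] binom_pow[OF finC])
  finally show ?thesis unfolding img .
qed

lemma finite_boolfuns: "finite (boolfuns n)"
proof -
  have "boolfuns n \<subseteq> (\<lambda>U x. x \<in> U) ` Pow (cube n)"
  proof
    fix f assume f: "f \<in> boolfuns n"
    have "f = (\<lambda>x. x \<in> {x\<in>cube n. f x})" using f by (auto simp: boolfuns_def)
    then show "f \<in> (\<lambda>U x. x \<in> U) ` Pow (cube n)" by blast
  qed
  then show ?thesis using finite_cube finite_subset by blast
qed

lemma PC_lemma:
  fixes p :: real
  assumes "1 \<le> k" "k \<le> n"
  shows "Pr n p (PC_minus n {..<k}) = 2 ^ k * (p ^ (2 ^ n - 2 ^ (n - k)) - p ^ (2 ^ n))"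
proof -
  define A where "A \<sigma> = {f\<in>boolfuns n. \<forall>x\<in>cube n. (\<exists>i<k. x i \<noteq> \<sigma> i) \<longrightarrow> f x}" for \<sigma> :: "nat \<Rightarrow> bool"
  define one where "one = (\<lambda>x::nat\<Rightarrow>bool. x \<in> cube n)"
  have one_A: "one \<in> A \<sigma>" for \<sigma> by (auto simp: A_def one_def boolfuns_def)
  have finA: "finite (A \<sigma>)" for \<sigma> using finite_boolfuns[of n] by (auto simp: A_def)
  have one_eq: "f = one" if "f \<in> boolfuns n" "\<forall>x\<in>cube n. f x" for f
    using that by (intro ext) (auto simp: one_def boolfuns_def)
  have PCeq: "PC_minus n {..<k} = (\<Union>\<sigma>\<in>cube k. A \<sigma> - {one})"
  proof
    show "PC_minus n {..<k} \<subseteq> (\<Union>\<sigma>\<in>cube k. A \<sigma> - {one})"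
    proof
      fix f assume f: "f \<in> PC_minus n {..<k}"
      then obtain \<sigma>' where s': "\<forall>x \<in> cube n. (\<exists>i \<in> {..<k}. x i \<noteq> \<sigma>' i) \<longrightarrow> f x = True"
        by (auto simp: PC_minus_def canalizing_on_def)
      define \<sigma> where "\<sigma> = (\<lambda>i. i < k \<and> \<sigma>' i)"
      have sc: "\<sigma> \<in> cube k" by (auto simp: \<sigma>_def cube_def)
      have fA: "f \<in> A \<sigma>" using f s' by (auto simp: A_def PC_minus_def \<sigma>_def)
      have "f \<noteq> one" using f by (auto simp: PC_minus_def constant_fun_def one_def)
      then show "f \<in> (\<Union>\<sigma>\<in>cube k. A \<sigma> - {one})" using sc fA by blast
    qed
  next
    show "(\<Union>\<sigma>\<in>cube k. A \<sigma> - {one}) \<subseteq> PC_minus n {..<k}"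
    proof
      fix f assume "f \<in> (\<Union>\<sigma>\<in>cube k. A \<sigma> - {one})"
      then obtain \<sigma> where fA: "f \<in> A \<sigma>" and fo: "f \<noteq> one" by blast
      have fb: "f \<in> boolfuns n" using fA by (auto simp: A_def)
      have can: "canalizing_on n True {..<k} f"
        unfolding canalizing_on_def using fA by (auto simp: A_def)
      define x0 where "x0 = (\<lambda>i::nat. i = 0 \<and> \<not> \<sigma> 0)"
      have x0c: "x0 \<in> cube n" using assms by (auto simp: x0_def cube_def)
      have "x0 0 \<noteq> \<sigma> 0" by (auto simp: x0_def)
      then have fx0: "f x0" using fA x0c assms by (auto simp: A_def)
      have nc: "\<not> constant_fun n f"
      proof
        assume "constant_fun n f"
        then obtain c where c: "\<forall>x \<in> cube n. f x = c" by (auto simp: constant_fun_def)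
        then have "c" using fx0 x0c by auto
        then have "f = one" using c fb one_eq by auto
        then show False using fo by simp
      qed
      show "f \<in> PC_minus n {..<k}" using fb can nc by (simp add: PC_minus_def)
    qed
  qed
  have disj: "(A \<sigma> - {one}) \<inter> (A \<tau> - {one}) = {}" if st: "\<sigma> \<in> cube k" "\<tau> \<in> cube k" "\<sigma> \<noteq> \<tau>" for \<sigma> \<tau>
  proof -
    obtain j where j: "\<sigma> j \<noteq> \<tau> j" using st(3) by auto
    have jk: "j < k" using j st(1,2) by (auto simp: cube_def not_less[symmetric])
    have "f = one" if "f \<in> A \<sigma>" "f \<in> A \<tau>" for f
    proof (rule one_eq)
      show "f \<in> boolfuns n" using that by (auto simp: A_def)
      show "\<forall>x\<in>cube n. f x"
      proof
        fix x assume x: "x \<in> cube n"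
        show "f x"
        proof (cases "\<exists>i<k. x i \<noteq> \<sigma> i")
          case True then show ?thesis using that x by (auto simp: A_def)
        next
          case False
          then have "x j \<noteq> \<tau> j" using jk j by auto
          then show ?thesis using that x jk by (auto simp: A_def)
        qed
      qed
    qed
    then show ?thesis by blast
  qed
  have sub: "PC_minus n {..<k} \<inter> boolfuns n = PC_minus n {..<k}" by (auto simp: PC_minus_def)
  have pone: "prob_fun n p one = p ^ (2 ^ n)"
  proof -
    have e1: "{x \<in> cube n. one x} = cube n" and e2: "{x \<in> cube n. \<not> one x} = {}" by (auto simp: one_def)
    show ?thesis unfolding prob_fun_def e1 e2 by (simp add: card_cube)
  qed
  have each: "sum (prob_fun n p) (A \<sigma> - {one}) = p ^ (2 ^ n - 2 ^ (n - k)) - p ^ (2 ^ n)"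
    if "\<sigma> \<in> cube k" for \<sigma>
  proof -
    have "sum (prob_fun n p) (A \<sigma> - {one}) = sum (prob_fun n p) (A \<sigma>) - prob_fun n p one"
      using finA one_A by (simp add: sum_diff1)
    also have "sum (prob_fun n p) (A \<sigma>) = p ^ (2 ^ n - 2 ^ (n - k))"
      unfolding A_def by (rule prob_A[OF that assms(2)])
    finally show ?thesis using pone by simp
  qed
  have "Pr n p (PC_minus n {..<k}) = sum (prob_fun n p) (\<Union>\<sigma>\<in>cube k. A \<sigma> - {one})"
    unfolding Pr_def sub unfolding PCeq ..
  also have "\<dots> = (\<Sum>\<sigma>\<in>cube k. sum (prob_fun n p) (A \<sigma> - {one}))"
    using finite_cube finA disj by (intro sum.UNION_disjoint) auto
  also have "\<dots> = (\<Sum>\<sigma>\<in>cube k. p ^ (2 ^ n - 2 ^ (n - k)) - p ^ (2 ^ n))"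
    using each by (rule sum.cong[OF refl])
  also have "\<dots> = 2 ^ k * (p ^ (2 ^ n - 2 ^ (n - k)) - p ^ (2 ^ n))"
    by (simp add: card_cube)
  finally show ?thesis .
qed

definition negf :: "nat \<Rightarrow> ((nat \<Rightarrow> bool) \<Rightarrow> bool) \<Rightarrow> ((nat \<Rightarrow> bool) \<Rightarrow> bool)" where
  "negf n f = (\<lambda>x. x \<in> cube n \<and> \<not> f x)"

lemma negf_bool: "negf n f \<in> boolfuns n" by (auto simp: negf_def boolfuns_def)

lemma negf_negf: "f \<in> boolfuns n \<Longrightarrow> negf n (negf n f) = f"
  by (intro ext) (auto simp: negf_def boolfuns_def)

lemma negf_const: "constant_fun n (negf n f) \<longleftrightarrow> constant_fun n f"
proof
  assume "constant_fun n (negf n f)"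
  then obtain c where "\<forall>x \<in> cube n. negf n f x = c" by (auto simp: constant_fun_def)
  then have "\<forall>x \<in> cube n. f x = (\<not> c)" by (auto simp: negf_def)
  then show "constant_fun n f" by (auto simp: constant_fun_def)
next
  assume "constant_fun n f"
  then obtain c where "\<forall>x \<in> cube n. f x = c" by (auto simp: constant_fun_def)
  then have "\<forall>x \<in> cube n. negf n f x = (\<not> c)" by (auto simp: negf_def)
  then show "constant_fun n (negf n f)" by (auto simp: constant_fun_def)
qed

lemma negf_can: "canalizing_on n False I (negf n f) \<longleftrightarrow> canalizing_on n True I f"
proof -
  have "\<And>\<sigma>. (\<forall>x \<in> cube n. (\<exists>i \<in> I. x i \<noteq> \<sigma> i) \<longrightarrow> negf n f x = False)
     \<longleftrightarrow> (\<forall>x \<in> cube n. (\<exists>i \<in> I. x i \<noteq> \<sigma> i) \<longrightarrow> f x = True)"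
    by (simp add: negf_def)
  then show ?thesis unfolding canalizing_on_def by simp
qed

lemma negf_prob: "prob_fun n p (negf n f) = prob_fun n (1 - p) f"
proof -
  have e1: "{x \<in> cube n. negf n f x} = {x \<in> cube n. \<not> f x}"
   and e2: "{x \<in> cube n. \<not> negf n f x} = {x \<in> cube n. f x}" by (auto simp: negf_def)
  show ?thesis unfolding prob_fun_def e1 e2 by simp
qed

lemma NC_eq: "NC_minus n I = negf n ` PC_minus n I"
proof
  show "NC_minus n I \<subseteq> negf n ` PC_minus n I"
  proof
    fix f assume f: "f \<in> NC_minus n I"
    then have fb: "f \<in> boolfuns n" by (simp add: NC_minus_def)
    have "negf n f \<in> PC_minus n I"
      using f negf_bool[of n f] negf_const[of n f] negf_can[of n I "negf n f"] negf_negf[OF fb]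
      by (simp add: NC_minus_def PC_minus_def)
    then show "f \<in> negf n ` PC_minus n I" using negf_negf[OF fb] by (metis image_eqI)
  qed
next
  show "negf n ` PC_minus n I \<subseteq> NC_minus n I"
  proof
    fix g assume "g \<in> negf n ` PC_minus n I"
    then obtain f where f: "f \<in> PC_minus n I" and g: "g = negf n f" by blast
    show "g \<in> NC_minus n I" unfolding g NC_minus_def
      using f negf_bool[of n f] negf_const[of n f] negf_can[of n I f] by (simp add: PC_minus_def)
  qed
qed

lemma NC_lemma:
  fixes p :: real
  assumes "1 \<le> k" "k \<le> n"
  shows "Pr n p (NC_minus n {..<k}) = 2 ^ k * ((1 - p) ^ (2 ^ n - 2 ^ (n - k)) - (1 - p) ^ (2 ^ n))"
proof -
  have inj: "inj_on (negf n) (PC_minus n {..<k})"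
  proof (rule inj_onI)
    fix f g assume f: "f \<in> PC_minus n {..<k}" and g: "g \<in> PC_minus n {..<k}" and e: "negf n f = negf n g"
    have "f = negf n (negf n f)" using f by (simp add: negf_negf PC_minus_def)
    also have "\<dots> = g" using g e by (simp add: negf_negf PC_minus_def)
    finally show "f = g" .
  qed
  have s1: "NC_minus n {..<k} \<inter> boolfuns n = NC_minus n {..<k}" by (auto simp: NC_minus_def)
  have s2: "PC_minus n {..<k} \<inter> boolfuns n = PC_minus n {..<k}" by (auto simp: PC_minus_def)
  have "Pr n p (NC_minus n {..<k}) = sum (prob_fun n p) (negf n ` PC_minus n {..<k})"
    unfolding Pr_def s1 unfolding NC_eq ..
  also have "\<dots> = sum (prob_fun n p \<circ> negf n) (PC_minus n {..<k})" by (rule sum.reindex[OF inj])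
  also have "\<dots> = Pr n (1 - p) (PC_minus n {..<k})"
    unfolding Pr_def s2 by (simp add: negf_prob comp_def)
  also have "\<dots> = 2 ^ k * ((1 - p) ^ (2 ^ n - 2 ^ (n - k)) - (1 - p) ^ (2 ^ n))"
    by (rule PC_lemma[OF assms])
  finally show ?thesis .
qed

theorem mainTheorem6:
  fixes n k :: nat and p :: real
  assumes "n \<ge> 1" and "0 \<le> p" and "p \<le> 1" and "1 \<le> k" and "k < n"
  shows "Pr n p (PC_minus n {..<k}) = 2 ^ k * (p ^ (2 ^ n - 2 ^ (n - k)) - p ^ (2 ^ n))
         \<and> Pr n p (NC_minus n {..<k}) =
           2 ^ k * ((1 - p) ^ (2 ^ n - 2 ^ (n - k)) - (1 - p) ^ (2 ^ n))"
  using PC_lemma[of k n p] NC_lemma[of k n p] assms by simp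

end
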